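(* Assume the standing setup with $\beta=1/\gamma$, where $\gamma$ satisfies (A1) and (A2), and let $Y(t)$ be the solution of the gradient flow of relative entropy with arbitrary initial data $Y_0$. If $t_i\to\infty$ is a sequence of times with $\operatorname{diam}Y(t_i)\to\infty$, then a subsequence of $Y(t_i)/\operatorname{diam}Y(t_i)$ converges to $Y_\infty=(y_1^\infty,\dots,y_n^\infty)\in(\mathbb{R}^s)^n$ consisting of $n$ pairwise distinct points.
   Context: Standing setup. Fix integers $s\ge 1$ and $n>s+1$. Let $\mathcal{P}_n=\{(i,j): i,j\in\{1,\dots,n\},\ i\neq j\}$. Let $(p_{ij})_{i\neq j}$ be a probability distribution on $\mathcal{P}_n$ (so $\sum_{i\neq j}p_{ij}=1$) with $p_{ij}=p_{ji}>0$ for all $i\neq j$. For points $Y=(y_1,\dots,y_n)$ with $y_i\in\mathbb{R}^s$ define $q_{ij}=\beta(|y_i-y_j|^2)/\sum_{k\neq \ell}\beta(|y_k-y_\ell|^2)$ for $i\neq j$, and the relative entropy $\mathcal{C}(Y)=\sum_{i\neq j}p_{ij}\log(p_{ij}/q_{ij})$. The gradient flow of $\mathcal{C}$ is the ODE system $$\frac{dy_i}{dt}=4\sum_{j\neq i}(p_{ij}-q_{ij})(y_i-y_j)(\log\beta)'(|y_i-y_j|^2),\qquad i=1,\dots,n,$$ with solution $Y(t)$ existing for all $t\ge0$. Conditions: (A1) $\gamma:[0,\infty)\to(0,\infty)$ is smooth and convex with $\gamma(0)=1$, $\gamma'\ge0$, $\lim_{x\to\infty}\gamma(x)=\infty$;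 (A2) $\sup_{x\ge0}(\log\gamma)'(x)<\infty$; and $\beta:=1/\gamma$. $\operatorname{diam}Y=\max_{i,j}|y_i-y_j|$. *)

theory Defs
  imports "HOL-Analysis.Analysis"
begin

text \<open>Configurations Y = (y_0, ..., y_(n-1)) are functions nat => 'a, only indices < n matter.\<close>

definition pairs :: "nat \<Rightarrow> (nat \<times> nat) set" where
  "pairs n = {(i, j). i < n \<and> j < n \<and> i \<noteq> j}"

definition beta_of :: "(real \<Rightarrow> real) \<Rightarrow> real \<Rightarrow> real" where
  "beta_of \<gamma> x = 1 / \<gamma> x"

definition qprob :: "(real \<Rightarrow> real) \<Rightarrow> nat \<Rightarrow> (nat \<Rightarrow> 'a::real_normed_vector) \<Rightarrow> nat \<Rightarrow> nat \<Rightarrow> real" where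
  "qprob \<beta> n Y i j = \<beta> ((norm (Y i - Y j))\<^sup>2) /
      (\<Sum>(k, l)\<in>pairs n. \<beta> ((norm (Y k - Y l))\<^sup>2))"

definition diamY :: "nat \<Rightarrow> (nat \<Rightarrow> 'a::real_normed_vector) \<Rightarrow> real" where
  "diamY n Y = Max {norm (Y i - Y j) | i j. i < n \<and> j < n}"

text \<open>Right-hand side of the gradient flow; dlogbeta is the derivative of log beta.\<close>
definition flow_rhs :: "(real \<Rightarrow> real) \<Rightarrow> (real \<Rightarrow> real) \<Rightarrow> nat \<Rightarrow> (nat \<Rightarrow> nat \<Rightarrow> real)
    \<Rightarrow> (nat \<Rightarrow> 'a::real_normed_vector) \<Rightarrow> nat \<Rightarrow> 'a" where
  "flow_rhs \<beta> dlogbeta n p Y i =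
     4 *\<^sub>R (\<Sum>j\<in>{..<n} - {i}. ((p i j - qprob \<beta> n Y i j) * dlogbeta ((norm (Y i - Y j))\<^sup>2))
              *\<^sub>R (Y i - Y j))"

end

theory Submission
  imports Defs
begin

lemma dsq:
  fixes f :: "real \<Rightarrow> 'a::real_inner"
  assumes "(f has_vector_derivative f') (at t within S)"
  shows "((\<lambda>\<tau>. (norm (f \<tau>))\<^sup>2) has_real_derivative 2 * (f t \<bullet> f')) (at t within S)"
proof -
  have "((\<lambda>\<tau>. f \<tau> \<bullet> f \<tau>) has_derivative (\<lambda>h. f t \<bullet> (h *\<^sub>R f') + (h *\<^sub>R f') \<bullet> f t)) (at t within S)"
    using assms unfolding has_vector_derivative_def by (intro has_derivative_inner)
  moreover have "(\<lambda>h. f t \<bullet> (h *\<^sub>R f') + (h *\<^sub>R f') \<bullet> f t) = (*) (2 * (f t \<bullet> f'))"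
    by (auto simp: fun_eq_iff inner_commute algebra_simps)
  ultimately show ?thesis
    unfolding has_field_derivative_def power2_norm_eq_inner by simp
qed

lemma pairs_sum: "(\<Sum>(i,j)\<in>pairs n. f i j) = (\<Sum>i<n. \<Sum>j\<in>{..<n}-{i}. f i j)"
proof -
  have "pairs n = Sigma {..<n} (\<lambda>i. {..<n}-{i})" by (auto simp: pairs_def)
  then show ?thesis by (simp add: sum.Sigma)
qed

lemma pairs_swap: "(\<Sum>(i,j)\<in>pairs n. f i j) = (\<Sum>(i,j)\<in>pairs n. f j i)"
proof -
  have "(\<Sum>(i,j)\<in>pairs n. f j i) = sum (case_prod f) (prod.swap ` pairs n)"
    by (subst sum.reindex) (auto simp: inj_on_def case_prod_beta)
  moreover have "prod.swap ` pairs n = pairs n" by (auto simp: pairs_def image_iff)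
  ultimately show ?thesis by simp
qed

lemma finite_pairs: "finite (pairs n)"
  by (rule finite_subset[of _ "{..<n} \<times> {..<n}"]) (auto simp: pairs_def)

locale fsetup =
  fixes n :: nat and p :: "nat \<Rightarrow> nat \<Rightarrow> real" and \<gamma> :: "real \<Rightarrow> real"
    and D :: "nat \<Rightarrow> real \<Rightarrow> real" and Y :: "real \<Rightarrow> nat \<Rightarrow> 'a::euclidean_space"
  assumes p_sym: "\<And>i j. i < n \<Longrightarrow> j < n \<Longrightarrow> i \<noteq> j \<Longrightarrow> p i j = p j i"
    and p_pos: "\<And>i j. i < n \<Longrightarrow> j < n \<Longrightarrow> i \<noteq> j \<Longrightarrow> p i j > 0"
    and p_sum: "(\<Sum>(i, j)\<in>pairs n. p i j) = 1"
    and D0: "D 0 = \<gamma>"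
    and smooth: "\<And>k x. x \<ge> 0 \<Longrightarrow> (D k has_real_derivative D (Suc k) x) (at x within {0..})"
    and gamma_pos: "\<And>x. x \<ge> 0 \<Longrightarrow> \<gamma> x > 0"
    and flow: "\<And>t i. t \<ge> 0 \<Longrightarrow> i < n \<Longrightarrow>
       ((\<lambda>\<tau>. Y \<tau> i) has_vector_derivative
          flow_rhs (beta_of \<gamma>) (\<lambda>x. - (D 1 x / \<gamma> x)) n p (Y t) i) (at t within {0..})"
begin

definition "dd t i j = (norm (Y t i - Y t j))\<^sup>2"
definition "SS t = (\<Sum>(k,l)\<in>pairs n. 1 / \<gamma> (dd t k l))"
definition "ww t i j = D 1 (dd t i j) / \<gamma> (dd t i j)"
definition "qq t i j = (1 / \<gamma> (dd t i j)) / SS t"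
definition "aa t i j = (p i j - qq t i j) * ww t i j"
definition "vv t i = flow_rhs (beta_of \<gamma>) (\<lambda>x. - (D 1 x / \<gamma> x)) n p (Y t) i"
definition "FF t = (\<Sum>(i,j)\<in>pairs n. p i j * ln (\<gamma> (dd t i j))) + ln (SS t)"
definition "dd' t i j = 2 * ((Y t i - Y t j) \<bullet> (vv t i - vv t j))"

lemma dd_nonneg: "dd t i j \<ge> 0" by (simp add: dd_def)
lemma dd_sym: "dd t i j = dd t j i" by (simp add: dd_def norm_minus_commute)
lemma gpos: "\<gamma> (dd t i j) > 0" using gamma_pos dd_nonneg by blast

lemma SS_pos: assumes "n \<ge> 2" shows "SS t > 0"
proof -
  have "(0,1) \<in> pairs n" using assms by (auto simp: pairs_def)
  then show ?thesis unfolding SS_def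
    by (intro sum_pos2[where i="(0,1)"]) (auto simp: finite_pairs gpos less_imp_le)
qed

lemma qprob_eq: "qprob (beta_of \<gamma>) n (Y t) i j = qq t i j"
  by (simp add: qprob_def beta_of_def qq_def SS_def dd_def)

lemma vv_eq: "vv t i = - 4 *\<^sub>R (\<Sum>j\<in>{..<n}-{i}. aa t i j *\<^sub>R (Y t i - Y t j))"
proof -
  have "vv t i = 4 *\<^sub>R (\<Sum>j\<in>{..<n}-{i}. - (aa t i j *\<^sub>R (Y t i - Y t j)))"
    unfolding vv_def flow_rhs_def qprob_eq
    by (intro arg_cong[where f="\<lambda>x. 4 *\<^sub>R x"] sum.cong refl)
       (simp add: aa_def ww_def dd_def)
  then show ?thesis by (simp add: sum_negf)
qed

lemma dd_deriv: assumes "t \<ge> 0" "i < n" "j < n"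
  shows "((\<lambda>\<tau>. dd \<tau> i j) has_real_derivative dd' t i j) (at t within {0..})"
  unfolding dd_def dd'_def vv_def
  by (rule dsq[where f="\<lambda>\<tau>. Y \<tau> i - Y \<tau> j"]) (intro has_vector_derivative_diff flow assms)+

lemma g_deriv: assumes "t \<ge> 0" "i < n" "j < n"
  shows "((\<lambda>\<tau>. \<gamma> (dd \<tau> i j)) has_real_derivative D 1 (dd t i j) * dd' t i j) (at t within {0..})"
proof -
  have "(\<gamma> has_real_derivative D 1 (dd t i j)) (at (dd t i j) within {0..})"
    using smooth[of "dd t i j" 0] D0 dd_nonneg by simp
  then have "(\<gamma> has_real_derivative D 1 (dd t i j)) (at (dd t i j) within (\<lambda>\<tau>. dd \<tau> i j) ` {0..})"
    by (rule has_field_derivative_subset) (auto simp: dd_nonneg)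
  from DERIV_image_chain[OF this dd_deriv[OF assms]] show ?thesis by (simp add: o_def)
qed

lemma pairsD: "(i,j) \<in> pairs n \<Longrightarrow> i < n \<and> j < n \<and> i \<noteq> j" by (simp add: pairs_def)

lemma FF_deriv: assumes "t \<ge> 0" "n \<ge> 2"
  shows "(FF has_real_derivative
     (\<Sum>(i,j)\<in>pairs n. p i j * (1 / \<gamma> (dd t i j) * (D 1 (dd t i j) * dd' t i j)))
     + 1 / SS t * (\<Sum>(i,j)\<in>pairs n. (0 * \<gamma> (dd t i j) - 1 * (D 1 (dd t i j) * dd' t i j)) / (\<gamma> (dd t i j) * \<gamma> (dd t i j))))
     (at t within {0..})"
  unfolding FF_def
proof (rule DERIV_add)
  show "((\<lambda>x. \<Sum>(i, j)\<in>pairs n. p i j * ln (\<gamma> (dd x i j))) has_real_derivative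
    (\<Sum>(i,j)\<in>pairs n. p i j * (1 / \<gamma> (dd t i j) * (D 1 (dd t i j) * dd' t i j)))) (at t within {0..})"
  proof (rule DERIV_sum)
    fix x assume "x \<in> pairs n"
    then obtain i j where x: "x = (i,j)" "i < n" "j < n" by (cases x) (auto simp: pairs_def)
    show "((\<lambda>\<tau>. case x of (i, j) \<Rightarrow> p i j * ln (\<gamma> (dd \<tau> i j))) has_real_derivative
      (case x of (i, j) \<Rightarrow> p i j * (1 / \<gamma> (dd t i j) * (D 1 (dd t i j) * dd' t i j)))) (at t within {0..})"
      unfolding x(1) case_prod_conv
      by (intro DERIV_cmult DERIV_ln_divide[THEN DERIV_chain2] g_deriv assms x gpos)
  qed
  have "((\<lambda>x. SS x) has_real_derivative
    (\<Sum>(i,j)\<in>pairs n. (0 * \<gamma> (dd t i j) - 1 * (D 1 (dd t i j) * dd' t i j)) / (\<gamma> (dd t i j) * \<gamma> (dd t i j)))) (at t within {0..})"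
    unfolding SS_def
  proof (rule DERIV_sum)
    fix x assume "x \<in> pairs n"
    then obtain i j where x: "x = (i,j)" "i < n" "j < n" by (cases x) (auto simp: pairs_def)
    show "((\<lambda>\<tau>. case x of (i, j) \<Rightarrow> 1 / \<gamma> (dd \<tau> i j)) has_real_derivative
      (case x of (i, j) \<Rightarrow> (0 * \<gamma> (dd t i j) - 1 * (D 1 (dd t i j) * dd' t i j)) / (\<gamma> (dd t i j) * \<gamma> (dd t i j)))) (at t within {0..})"
      unfolding x(1) case_prod_conv
      using gpos[of t i j] by (intro DERIV_divide DERIV_const g_deriv assms x) auto
  qed
  then show "((\<lambda>x. ln (SS x)) has_real_derivative 1 / SS t * (\<Sum>(i,j)\<in>pairs n. (0 * \<gamma> (dd t i j) - 1 * (D 1 (dd t i j) * dd' t i j)) / (\<gamma> (dd t i j) * \<gamma> (dd t i j)))) (at t within {0..})"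
    by (intro DERIV_ln_divide[THEN DERIV_chain2] SS_pos assms)
qed

lemma aa_sym: "i < n \<Longrightarrow> j < n \<Longrightarrow> i \<noteq> j \<Longrightarrow> aa t i j = aa t j i"
  unfolding aa_def qq_def ww_def using p_sym dd_sym by metis

lemma deriv_val: assumes "n \<ge> 2"
  shows "(\<Sum>(i,j)\<in>pairs n. p i j * (1 / \<gamma> (dd t i j) * (D 1 (dd t i j) * dd' t i j)))
     + 1 / SS t * (\<Sum>(i,j)\<in>pairs n. (0 * \<gamma> (dd t i j) - 1 * (D 1 (dd t i j) * dd' t i j)) / (\<gamma> (dd t i j) * \<gamma> (dd t i j)))
     = (\<Sum>(i,j)\<in>pairs n. aa t i j * dd' t i j)"
proof -
  have S: "SS t > 0" using SS_pos assms by blast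
  have "1 / SS t * (\<Sum>(i,j)\<in>pairs n. (0 * \<gamma> (dd t i j) - 1 * (D 1 (dd t i j) * dd' t i j)) / (\<gamma> (dd t i j) * \<gamma> (dd t i j)))
     = (\<Sum>(i,j)\<in>pairs n. - (qq t i j * ww t i j * dd' t i j))"
    unfolding sum_distrib_left
    by (intro sum.cong refl) (auto simp: qq_def ww_def field_simps)
  moreover have "(\<Sum>(i,j)\<in>pairs n. p i j * (1 / \<gamma> (dd t i j) * (D 1 (dd t i j) * dd' t i j)))
     = (\<Sum>(i,j)\<in>pairs n. p i j * ww t i j * dd' t i j)"
    by (intro sum.cong refl) (auto simp: ww_def field_simps)
  ultimately show ?thesis
    by (simp add: sum.distrib[symmetric] case_prod_beta aa_def algebra_simps)
qed

lemma inner_part: "(\<Sum>j\<in>{..<n}-{i}. aa t i j *\<^sub>R (Y t i - Y t j)) = - (1/4) *\<^sub>R vv t i"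
  by (simp add: vv_eq)

lemma deriv_val2: "(\<Sum>(i,j)\<in>pairs n. aa t i j * dd' t i j) = - (\<Sum>i<n. (norm (vv t i))\<^sup>2)"
proof -
  define u where "u i j = Y t i - Y t j" for i j
  have "(\<Sum>(i,j)\<in>pairs n. aa t i j * dd' t i j)
      = (\<Sum>(i,j)\<in>pairs n. 2 * aa t i j * (u i j \<bullet> vv t i)) - (\<Sum>(i,j)\<in>pairs n. 2 * aa t i j * (u i j \<bullet> vv t j))"
    by (simp add: dd'_def u_def sum_subtractf[symmetric] case_prod_beta inner_diff_right algebra_simps)
  also have "(\<Sum>(i,j)\<in>pairs n. 2 * aa t i j * (u i j \<bullet> vv t j)) = (\<Sum>(i,j)\<in>pairs n. 2 * aa t j i * (u j i \<bullet> vv t i))"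
    by (rule pairs_swap)
  also have "\<dots> = (\<Sum>(i,j)\<in>pairs n. - (2 * aa t i j * (u i j \<bullet> vv t i)))"
    by (intro sum.cong refl) (auto simp: pairs_def aa_sym u_def inner_diff_left algebra_simps)
  also have "(\<Sum>(i,j)\<in>pairs n. 2 * aa t i j * (u i j \<bullet> vv t i)) - (\<Sum>(i,j)\<in>pairs n. - (2 * aa t i j * (u i j \<bullet> vv t i)))
     = (\<Sum>(i,j)\<in>pairs n. 4 * (aa t i j * (u i j \<bullet> vv t i)))"
    by (simp add: sum_negf case_prod_beta sum_distrib_left mult.assoc)
  also have "\<dots> = (\<Sum>i<n. 4 * ((\<Sum>j\<in>{..<n}-{i}. aa t i j *\<^sub>R u i j) \<bullet> vv t i))"
    by (simp add: pairs_sum inner_sum_left sum_distrib_left)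
  also have "\<dots> = (\<Sum>i<n. - (norm (vv t i))\<^sup>2)"
    unfolding u_def inner_part by (simp add: power2_norm_eq_inner)
  finally show ?thesis by (simp add: sum_negf)
qed

lemma FF_deriv2: assumes "t \<ge> 0" "n \<ge> 2"
  shows "(FF has_real_derivative - (\<Sum>i<n. (norm (vv t i))\<^sup>2)) (at t within {0..})"
  using FF_deriv[OF assms] unfolding deriv_val[OF assms(2)] deriv_val2 .

lemma FF_mono: assumes "t \<ge> 0" "n \<ge> 2" shows "FF t \<le> FF 0"
proof (rule DERIV_nonpos_imp_decreasing_open[OF assms(1)])
  fix x :: real assume x: "0 < x" "x < t"
  have "at x within {0..} = at x"
    by (rule at_within_interior) (use x in auto)
  then show "\<exists>y. (FF has_real_derivative y) (at x) \<and> y \<le> 0"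
    using FF_deriv2[of x] x assms by (intro exI[of _ "- (\<Sum>i<n. (norm (vv x i))\<^sup>2)"]) (auto intro: sum_nonneg)
next
  have "continuous_on {0..} FF"
    unfolding continuous_on_eq_continuous_within
    using FF_deriv2 assms(2) DERIV_continuous by fastforce
  then show "continuous_on {0..t} FF" by (rule continuous_on_subset) auto
qed

lemma FF_eq: assumes "n \<ge> 2" shows "FF t = (\<Sum>(i,j)\<in>pairs n. p i j * (- ln (qq t i j)))"
proof -
  have S: "SS t > 0" using SS_pos assms by blast
  have lnq: "- ln (qq t i j) = ln (\<gamma> (dd t i j)) + ln (SS t)" for i j
    using S gpos[of t i j] by (simp add: qq_def ln_div ln_mult)
  have "(\<Sum>(i,j)\<in>pairs n. p i j * (- ln (qq t i j))) = (\<Sum>(i,j)\<in>pairs n. p i j * ln (\<gamma> (dd t i j)) + p i j * ln (SS t))"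
    by (intro sum.cong refl) (auto simp: lnq algebra_simps)
  also have "\<dots> = FF t"
    using p_sum by (simp add: FF_def sum.distrib case_prod_beta sum_distrib_right[symmetric])
  finally show ?thesis ..
qed

lemma qq_le1: assumes "(i,j) \<in> pairs n" shows "qq t i j \<le> 1" "qq t i j > 0"
proof -
  have n: "n \<ge> 2" using assms by (auto simp: pairs_def)
  have S: "SS t > 0" using SS_pos n by blast
  have "1 / \<gamma> (dd t i j) \<le> SS t" unfolding SS_def
    using member_le_sum[OF assms, of "\<lambda>(k,l). 1 / \<gamma> (dd t k l)"] finite_pairs gpos
    by (auto simp: less_imp_le)
  then show "qq t i j \<le> 1" using S gpos[of t i j] by (simp add: qq_def field_simps)
  show "qq t i j > 0" using S gpos by (simp add: qq_def)
qed

lemma q_lower: assumes "t \<ge> 0" "(i,j) \<in> pairs n" shows "exp (- FF 0 / p i j) \<le> qq t i j"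
proof -
  have n: "n \<ge> 2" using assms by (auto simp: pairs_def)
  have pp: "p i j > 0" using assms p_pos by (auto simp: pairs_def)
  have "p i j * (- ln (qq t i j)) \<le> FF t"
  proof -
    have nn: "0 \<le> (case x of (k,l) \<Rightarrow> p k l * (- ln (qq t k l)))" if "x \<in> pairs n" for x
    proof -
      obtain k l where x: "x = (k,l)" by (cases x)
      have "p k l > 0" using p_pos pairsD that x by blast
      moreover have "ln (qq t k l) \<le> 0" using qq_le1[of k l t] that x by simp
      ultimately show ?thesis using x by (simp add: mult_nonneg_nonpos)
    qed
    show ?thesis unfolding FF_eq[OF n]
      using member_le_sum[OF assms(2), of "\<lambda>(k,l). p k l * (- ln (qq t k l))", OF nn finite_pairs] by simp
  qed
  also have "\<dots> \<le> FF 0" using FF_mono assms(1) n by blast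
  finally have "- ln (qq t i j) \<le> FF 0 / p i j" using pp by (simp add: field_simps)
  then have "- FF 0 / p i j \<le> ln (qq t i j)" by (simp add: field_simps)
  then show ?thesis using qq_le1(2)[OF assms(2)] by (metis exp_le_cancel_iff exp_ln)
qed

lemma key: assumes "n \<ge> 2"
  shows "\<exists>c>0. \<forall>t\<ge>0. \<forall>i j k l. (i,j) \<in> pairs n \<longrightarrow> (k,l) \<in> pairs n \<longrightarrow> c * \<gamma> (dd t i j) \<le> \<gamma> (dd t k l)"
proof -
  define c where "c = Min ((\<lambda>(i,j). exp (- FF 0 / p i j)) ` pairs n)"
  have "(0,1) \<in> pairs n" using assms by (auto simp: pairs_def)
  then have ne: "pairs n \<noteq> {}" by blast
  have cpos: "c > 0" unfolding c_def using ne finite_pairs by (subst Min_gr_iff) auto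
  have cle: "c \<le> exp (- FF 0 / p i j)" if "(i,j) \<in> pairs n" for i j
    unfolding c_def using that finite_pairs by (intro Min_le) force+
  have "c * \<gamma> (dd t i j) \<le> \<gamma> (dd t k l)" if t: "t \<ge> 0" and ij: "(i,j) \<in> pairs n" and kl: "(k,l) \<in> pairs n" for t i j k l
  proof -
    have S: "SS t > 0" using SS_pos assms by blast
    have "c \<le> qq t i j" using cle[OF ij] q_lower[OF t ij] by linarith
    then have "c * SS t \<le> 1 / \<gamma> (dd t i j)" using S gpos[of t i j] by (simp add: qq_def field_simps)
    moreover have "1 / \<gamma> (dd t k l) \<le> SS t" unfolding SS_def
      using member_le_sum[OF kl, of "\<lambda>(k,l). 1 / \<gamma> (dd t k l)"] finite_pairs gpos
      by (auto simp: less_imp_le)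
    ultimately have "c * (1 / \<gamma> (dd t k l)) \<le> 1 / \<gamma> (dd t i j)"
      using cpos by (smt (verit) mult_left_mono)
    then show ?thesis using gpos[of t i j] gpos[of t k l] by (simp add: field_simps)
  qed
  then show ?thesis using cpos by blast
qed


lemma sum_vv: "(\<Sum>i<n. vv t i) = 0"
proof -
  define u where "u i j = aa t i j *\<^sub>R (Y t i - Y t j)" for i j
  have A: "(\<Sum>(i,j)\<in>pairs n. u i j) = (\<Sum>(i,j)\<in>pairs n. u j i)" by (rule pairs_swap)
  also have "\<dots> = (\<Sum>(i,j)\<in>pairs n. - u i j)"
    by (intro sum.cong refl) (auto simp: pairs_def u_def aa_sym algebra_simps)
  finally have "(\<Sum>(i,j)\<in>pairs n. u i j) = 0" by (simp add: sum_negf case_prod_beta eq_neg_iff_add_eq_0 flip: scaleR_2)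
  then show ?thesis
    by (simp add: vv_eq sum_negf scaleR_sum_right[symmetric] pairs_sum u_def)
qed

lemma mean_const: assumes "t \<ge> 0" shows "(\<Sum>i<n. Y t i) = (\<Sum>i<n. Y 0 i)"
proof -
  have "\<exists>c. \<forall>x\<in>{0::real..}. (\<Sum>i<n. Y x i) = c"
  proof (rule has_derivative_zero_constant)
    fix x :: real assume x: "x \<in> {0..}"
    have "((\<lambda>\<tau>. \<Sum>i<n. Y \<tau> i) has_vector_derivative (\<Sum>i<n. vv x i)) (at x within {0..})"
      unfolding vv_def using x by (intro has_vector_derivative_sum flow) auto
    then show "((\<lambda>\<tau>. \<Sum>i<n. Y \<tau> i) has_derivative (\<lambda>h. 0)) (at x within {0..})"
      by (simp add: sum_vv has_vector_derivative_def)
  qed auto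
  then show ?thesis using assms by force
qed

end

lemma common_subseq:
  fixes f :: "nat \<Rightarrow> nat \<Rightarrow> 'a::heine_borel"
  assumes "\<And>i. i < m \<Longrightarrow> bounded (range (f i))"
  shows "\<exists>r. strict_mono r \<and> (\<forall>i<m. \<exists>l. (f i \<circ> r) \<longlonglongrightarrow> l)"
  using assms
proof (induction m)
  case 0
  then show ?case by (auto intro: strict_mono_id)
next
  case (Suc m)
  have "\<exists>r. strict_mono r \<and> (\<forall>i<m. \<exists>l. (f i \<circ> r) \<longlonglongrightarrow> l)"
    by (rule Suc.IH) (simp add: Suc.prems)
  then obtain r where r: "strict_mono r" "\<forall>i<m. \<exists>l. (f i \<circ> r) \<longlonglongrightarrow> l" by blast
  have "bounded (range (f m \<circ> r))"
    using Suc.prems[of m] by (rule bounded_subset) auto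
  then obtain l r2 where r2: "strict_mono r2" "((f m \<circ> r) \<circ> r2) \<longlonglongrightarrow> l"
    using bounded_imp_convergent_subsequence by blast
  have "\<forall>i<Suc m. \<exists>l. (f i \<circ> (r \<circ> r2)) \<longlonglongrightarrow> l"
  proof (intro allI impI)
    fix i assume "i < Suc m"
    then consider "i < m" | "i = m" by linarith
    then show "\<exists>l. (f i \<circ> (r \<circ> r2)) \<longlonglongrightarrow> l"
    proof cases
      case 1
      then obtain l' where "(f i \<circ> r) \<longlonglongrightarrow> l'" using r by blast
      then have "((f i \<circ> r) \<circ> r2) \<longlonglongrightarrow> l'" by (rule LIMSEQ_subseq_LIMSEQ) (rule r2)
      then show ?thesis by (auto simp: o_assoc)
    next
      case 2
      then show ?thesis using r2 by (auto simp: o_assoc)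
    qed
  qed
  moreover have "strict_mono (r \<circ> r2)" using r r2 by (simp add: strict_mono_o)
  ultimately show ?case by blast
qed

lemma diam_set: "{norm (Z i - Z j) | i j. i < n \<and> j < n} = (\<lambda>(i,j). norm (Z i - Z j)) ` ({..<n} \<times> {..<n})"
  by auto

lemma diam_ge: "i < n \<Longrightarrow> j < n \<Longrightarrow> norm (Z i - Z j) \<le> diamY n Z"
  unfolding diamY_def diam_set by (rule Max_ge) auto

lemma diam_attained: assumes "n > 0" shows "\<exists>i<n. \<exists>j<n. diamY n Z = norm (Z i - Z j)"
proof -
  have "diamY n Z \<in> (\<lambda>(i,j). norm (Z i - Z j)) ` ({..<n} \<times> {..<n})"
    unfolding diamY_def diam_set using assms by (intro Max_in) auto
  then show ?thesis by auto
qed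

theorem theorem1p3:
  fixes n :: nat
    and p :: "nat \<Rightarrow> nat \<Rightarrow> real"
    and \<gamma> :: "real \<Rightarrow> real"
    and D :: "nat \<Rightarrow> real \<Rightarrow> real"
    and Y :: "real \<Rightarrow> nat \<Rightarrow> 'a::euclidean_space"
  assumes n_gt: "n > DIM('a) + 1"
    and p_sym: "\<And>i j. i < n \<Longrightarrow> j < n \<Longrightarrow> i \<noteq> j \<Longrightarrow> p i j = p j i"
    and p_pos: "\<And>i j. i < n \<Longrightarrow> j < n \<Longrightarrow> i \<noteq> j \<Longrightarrow> p i j > 0"
    and p_sum: "(\<Sum>(i, j)\<in>pairs n. p i j) = 1"
    and D0: "D 0 = \<gamma>"
    and smooth: "\<And>k x. x \<ge> 0 \<Longrightarrow> (D k has_real_derivative D (Suc k) x) (at x within {0..})"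
    and gamma_pos: "\<And>x. x \<ge> 0 \<Longrightarrow> \<gamma> x > 0"
    and convex: "convex_on {0..} \<gamma>"
    and gamma0: "\<gamma> 0 = 1"
    and gamma_mono: "\<And>x. x \<ge> 0 \<Longrightarrow> D 1 x \<ge> 0"
    and gamma_lim: "filterlim \<gamma> at_top at_top"
    and A2: "bdd_above ((\<lambda>x. D 1 x / \<gamma> x) ` {0..})"
    and flow: "\<And>t i. t \<ge> 0 \<Longrightarrow> i < n \<Longrightarrow>
       ((\<lambda>\<tau>. Y \<tau> i) has_vector_derivative
          flow_rhs (beta_of \<gamma>) (\<lambda>x. - (D 1 x / \<gamma> x)) n p (Y t) i) (at t within {0..})"
  shows "\<forall>tt :: nat \<Rightarrow> real. filterlim tt at_top sequentially \<longrightarrow>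
           filterlim (\<lambda>k. diamY n (Y (tt k))) at_top sequentially \<longrightarrow>
           (\<exists>r Yinf. strict_mono r \<and>
              (\<forall>i<n. ((\<lambda>k. (1 / diamY n (Y (tt (r k)))) *\<^sub>R Y (tt (r k)) i) \<longlongrightarrow> Yinf i) sequentially) \<and>
              (\<forall>i<n. \<forall>j<n. i \<noteq> j \<longrightarrow> Yinf i \<noteq> Yinf j))"
proof (intro allI impI)
  fix tt :: "nat \<Rightarrow> real"
  assume tt: "filterlim tt at_top sequentially"
    and dl: "filterlim (\<lambda>k. diamY n (Y (tt k))) at_top sequentially"
  have n2: "n \<ge> 2" using n_gt DIM_positive[where 'a='a] by linarith
  interpret L: fsetup n p \<gamma> D Y
    by (rule fsetup.intro[OF p_sym p_pos p_sum D0 smooth gamma_pos flow])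
  obtain c where c: "c > 0" and ckey: "\<And>t i j k l. t \<ge> 0 \<Longrightarrow> (i,j) \<in> pairs n \<Longrightarrow> (k,l) \<in> pairs n \<Longrightarrow>
      c * \<gamma> (L.dd t i j) \<le> \<gamma> (L.dd t k l)"
    using L.key[OF n2] by blast
  define Dk where "Dk k = diamY n (Y (tt k))" for k
  have e1: "eventually (\<lambda>k. 0 \<le> tt k) sequentially"
    using tt unfolding filterlim_at_top by blast
  have e2: "eventually (\<lambda>k. 1 \<le> Dk k) sequentially"
    using dl unfolding filterlim_at_top Dk_def by blast
  have "eventually (\<lambda>k. tt k \<ge> 0 \<and> Dk k \<ge> 1) sequentially"
    using eventually_conj[OF e1 e2] by simp
  then obtain N where N: "\<And>k. k \<ge> N \<Longrightarrow> tt k \<ge> 0 \<and> Dk k \<ge> 1"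
    by (auto simp: eventually_sequentially)
  define m0 where "m0 = (\<Sum>i<n. Y 0 i)"
  define f where "f i k = (1 / Dk (k+N)) *\<^sub>R Y (tt (k+N)) i" for i k
  have bnd: "norm (f i k) \<le> 1 + norm m0" if "i < n" for i k
  proof -
    define t where "t = tt (k+N)"
    define DD where "DD = Dk (k+N)"
    have t0: "t \<ge> 0" and D1: "DD \<ge> 1" using N[of "k+N"] by (auto simp: t_def DD_def)
    have "of_nat n *\<^sub>R Y t i = (\<Sum>j<n. (Y t i - Y t j)) + m0"
      using L.mean_const[OF t0] by (simp add: m0_def sum_subtractf sum_constant_scaleR)
    then have "norm (of_nat n *\<^sub>R Y t i) \<le> norm (\<Sum>j<n. (Y t i - Y t j)) + norm m0"
      by (simp add: norm_triangle_ineq)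
    also have "norm (\<Sum>j<n. (Y t i - Y t j)) \<le> (\<Sum>j<n. norm (Y t i - Y t j))"
      by (rule norm_sum)
    also have "(\<Sum>j<n. norm (Y t i - Y t j)) \<le> (\<Sum>j<n. DD)"
      using that by (intro sum_mono) (auto simp: DD_def Dk_def t_def intro: diam_ge)
    finally have A: "real n * norm (Y t i) \<le> real n * DD + norm m0" by simp
    have n1: "real n \<ge> 1" using n2 by simp
    have "norm m0 \<le> real n * norm m0" using n1 mult_right_mono[of 1 "real n" "norm m0"] by simp
    with A have "real n * norm (Y t i) \<le> real n * (DD + norm m0)" by (simp add: distrib_left)
    then have "norm (Y t i) \<le> DD + norm m0" using n1 by (simp add: mult_le_cancel_left)
    then have "norm (Y t i) / DD \<le> 1 + norm m0 / DD" using D1 by (simp add: field_simps)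
    also have "norm m0 / DD \<le> norm m0" using D1 by (simp add: divide_le_eq mult_le_cancel_left1)
    finally show ?thesis using D1 by (simp add: f_def t_def DD_def)
  qed
  have "\<exists>r. strict_mono r \<and> (\<forall>i<n. \<exists>l. (f i \<circ> r) \<longlonglongrightarrow> l)"
  proof (rule common_subseq)
    fix i assume "i < n"
    then have "\<forall>x\<in>range (f i). norm x \<le> 1 + norm m0" using bnd by blast
    then show "bounded (range (f i))" unfolding bounded_iff by blast
  qed
  then obtain r' where r': "strict_mono r'" "\<forall>i<n. \<exists>l. (f i \<circ> r') \<longlonglongrightarrow> l" by blast
  define Yinf where "Yinf i = (SOME l. (f i \<circ> r') \<longlonglongrightarrow> l)" for i
  have lim: "(f i \<circ> r') \<longlonglongrightarrow> Yinf i" if "i < n" for i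
    unfolding Yinf_def by (rule someI_ex) (use r'(2) that in blast)
  define r where "r k = r' k + N" for k
  have smr: "strict_mono r" using r'(1) by (simp add: strict_mono_def r_def)
  have seq: "(\<lambda>k. (1 / diamY n (Y (tt (r k)))) *\<^sub>R Y (tt (r k)) i) = f i \<circ> r'" for i
    by (simp add: fun_eq_iff f_def r_def Dk_def)
  have dist: "Yinf i \<noteq> Yinf j" if ij: "i < n" "j < n" "i \<noteq> j" for i j
  proof
    assume eq: "Yinf i = Yinf j"
    have "(\<lambda>k. f i (r' k) - f j (r' k)) \<longlonglongrightarrow> 0"
      using tendsto_diff[OF lim[OF ij(1)] lim[OF ij(2)]] eq by (simp add: o_def)
    then have "(\<lambda>k. (norm (f i (r' k) - f j (r' k)))\<^sup>2) \<longlonglongrightarrow> (norm (0::'a))\<^sup>2"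
      by (intro tendsto_power tendsto_norm)
    then have lam: "(\<lambda>k. (norm (f i (r' k) - f j (r' k)))\<^sup>2) \<longlonglongrightarrow> 0" by simp
    have Dlim: "filterlim (\<lambda>k. Dk (r k)) at_top sequentially"
      using filterlim_compose[OF dl filterlim_subseq[OF smr]] by (simp add: Dk_def)
    have Glim: "filterlim (\<lambda>k. \<gamma> ((Dk (r k))\<^sup>2)) at_top sequentially"
      by (rule filterlim_compose[OF gamma_lim filterlim_pow_at_top[OF _ Dlim]]) simp
    have e1: "eventually (\<lambda>k. 3 / c \<le> \<gamma> ((Dk (r k))\<^sup>2)) sequentially"
      using Glim unfolding filterlim_at_top by blast
    have e2: "eventually (\<lambda>k. (norm (f i (r' k) - f j (r' k)))\<^sup>2 < c / 2) sequentially"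
      by (rule order_tendstoD(2)[OF lam]) (use c in simp)
    obtain K where K: "\<And>k. k \<ge> K \<Longrightarrow> 3 / c \<le> \<gamma> ((Dk (r k))\<^sup>2) \<and> (norm (f i (r' k) - f j (r' k)))\<^sup>2 < c / 2"
      using eventually_conj[OF e1 e2] by (auto simp: eventually_sequentially)
    define t where "t = tt (r K)"
    define DD where "DD = Dk (r K)"
    define G where "G = \<gamma> (DD\<^sup>2)"
    define \<mu> where "\<mu> = (norm (f i (r' K) - f j (r' K)))\<^sup>2"
    have G3: "3 / c \<le> G" and mu: "\<mu> < c / 2" using K[of K] by (auto simp: G_def DD_def \<mu>_def)
    have t0: "t \<ge> 0" and D1: "DD \<ge> 1" using N[of "r K"] by (auto simp: t_def DD_def r_def)
    obtain a b where ab: "a < n" "b < n" "DD = norm (Y t a - Y t b)"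
      using diam_attained[of n "Y t"] n2 by (auto simp: DD_def Dk_def t_def)
    have "a \<noteq> b" using ab D1 by auto
    then have abp: "(a,b) \<in> pairs n" and ijp: "(i,j) \<in> pairs n" using ab ij by (auto simp: pairs_def)
    have ck: "c * G \<le> \<gamma> (L.dd t i j)"
      using ckey[OF t0 abp ijp] ab(3) by (simp add: L.dd_def G_def)
    have fdiff: "f i (r' K) - f j (r' K) = (1 / DD) *\<^sub>R (Y t i - Y t j)"
      by (simp add: f_def DD_def t_def r_def scaleR_diff_right)
    have mu_eq: "\<mu> = (norm (Y t i - Y t j))\<^sup>2 / DD\<^sup>2"
      using D1 by (simp add: \<mu>_def fdiff power_divide)
    have "norm (Y t i - Y t j) \<le> DD" using diam_ge[OF ij(1,2)] by (simp add: DD_def Dk_def t_def)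
    then have "(norm (Y t i - Y t j))\<^sup>2 \<le> DD\<^sup>2" by (intro power_mono) auto
    then have mu1: "\<mu> \<le> 1" using D1 mu_eq by simp
    have mu0: "\<mu> \<ge> 0" by (simp add: \<mu>_def)
    have "L.dd t i j = (1 - \<mu>) *\<^sub>R 0 + \<mu> *\<^sub>R DD\<^sup>2"
      using D1 by (simp add: L.dd_def mu_eq)
    then have "\<gamma> (L.dd t i j) \<le> (1 - \<mu>) * \<gamma> 0 + \<mu> * \<gamma> (DD\<^sup>2)"
      using convex_onD[OF convex, of \<mu> 0 "DD\<^sup>2"] mu0 mu1 by simp
    then have "c * G \<le> (1 - \<mu>) + \<mu> * G" using ck gamma0 by (simp add: G_def)
    moreover have G0: "G \<ge> 0" using G3 c by (smt (verit) divide_pos_pos zero_less_numeral)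
    have "\<mu> * G \<le> (c/2) * G" using mult_right_mono[OF less_imp_le[OF mu] G0] .
    moreover have "(c/2) * G = (c * G) / 2" by simp
    moreover have "c * G \<ge> 3" using G3 c by (simp add: field_simps)
    ultimately show False using mu0 by linarith
  qed
  show "\<exists>r Yinf. strict_mono r \<and>
              (\<forall>i<n. ((\<lambda>k. (1 / diamY n (Y (tt (r k)))) *\<^sub>R Y (tt (r k)) i) \<longlongrightarrow> Yinf i) sequentially) \<and>
              (\<forall>i<n. \<forall>j<n. i \<noteq> j \<longrightarrow> Yinf i \<noteq> Yinf j)"
  proof (intro exI[of _ r] exI[of _ Yinf] conjI allI impI)
    show "strict_mono r" by (rule smr)
    fix i assume "i < n"
    then show "((\<lambda>k. (1 / diamY n (Y (tt (r k)))) *\<^sub>R Y (tt (r k)) i) \<longlongrightarrow> Yinf i) sequentially"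
      unfolding seq by (rule lim)
  next
    fix i j assume "i < n" "j < n" "i \<noteq> j"
    then show "Yinf i \<noteq> Yinf j" by (rule dist)
  qed
qed

end
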